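(* Let $X$ be an observation whose distribution $P_\theta$ depends on a parameter $\theta\in\Theta$. Let $N=\{1,\dots,n\}$ index a family of null hypotheses $H_1,\dots,H_n$, each $H_i\subseteq\Theta$, with elementary test functions $\phi_1,\dots,\phi_n$ (each a $\{0,1\}$-valued function of $X$, $\phi_i=1$ meaning $H_i$ is rejected) and rejection regions $R_i=\{\phi_i=1\}$ in the sample space. Let $0<\alpha<1$. Suppose $\emptyset\neq I\subset N$, $\emptyset\neq J\subset N$, $I\cap J=\emptyset$, and $\bigcup_{i\in I}R_i\subseteq\bigcup_{j\in J}R_j$. For each $j\in J$ let $\phi^j=\{\phi_i^j: i\in N\setminus\{j\}\}$ be a multiple test (a collection of elementary test functions indexed by $N\setminus\{j\}$), and let $\phi^I=\{\phi_i^I: i\in N\setminus I\}$ be a multiple test indexed by $N\setminus I$. Define elementary test functions $\psi_i$, $i\in N$, by $$\psi_i=\begin{cases}\min\Big(\min_{j\in J,\ j\neq i}\phi_i^j,\ \phi_i^I\Big), & i\in N\setminus I,\\[4pt] \min\Big(\min_{j\in J}\phi_i^j,\ \max_{j\in J}\psi_j\Big), & i\in I,\end{cases}$$ (which is well defined since $J\subseteq N\setminus I$). If $\phi^j\in\Phi_\alpha(N\setminus\{j\})$ for every $j\in J$ and $\phi^I\in\Phi_\alpha(N\setminus I)$, then $\{\psi_i:i\in N\}\in\Phi_\alpha(N)$.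
   Context: For elementary test functions, $\min_{i\in S}\phi_i$ equals $1$ if $\phi_i=1$ for all $i\in S$ and $0$ otherwise (with the convention that a minimum over the empty set equals $1$), and $\max_{i\in S}\phi_i$ equals $1$ if $\phi_i=1$ for some $i\in S$ and $0$ otherwise. For $\emptyset\neq S\subseteq N$, $\Phi_\alpha(S)$ denotes the set of all multiple tests $\{\phi_i:i\in S\}$ for the hypotheses $\{H_i:i\in S\}$ that strongly control the familywise error rate at level $\alpha$, i.e. for every $\theta\in\Theta$, $P_\theta(\phi_i=1\text{ for some } i\in S \text{ with }\theta\in H_i)\le\alpha$; equivalently, for every nonempty $S'\subseteq S$ and every $\theta\in\bigcap_{i\in S'}H_i$, $P_\theta(\max_{i\in S'}\phi_i=1)\le\alpha$. *)

theory Defs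
  imports "HOL-Probability.Probability"
begin

definition elementary_test :: "'x measure \<Rightarrow> ('x \<Rightarrow> real) \<Rightarrow> bool" where
  "elementary_test M f \<longleftrightarrow> f \<in> borel_measurable M \<and> (\<forall>x\<in>space M. f x \<in> {0, 1})"

definition min_over :: "'i set \<Rightarrow> ('i \<Rightarrow> real) \<Rightarrow> real" where
  "min_over S f = (if S = {} then 1 else Min (f ` S))"

definition max_over :: "'i set \<Rightarrow> ('i \<Rightarrow> real) \<Rightarrow> real" where
  "max_over S f = (if S = {} then 0 else Max (f ` S))"

definition fwer_controls ::
  "'x measure \<Rightarrow> ('p \<Rightarrow> 'x measure) \<Rightarrow> 'p set \<Rightarrow> (nat \<Rightarrow> 'p set) \<Rightarrow> real
    \<Rightarrow> nat set \<Rightarrow> (nat \<Rightarrow> 'x \<Rightarrow> real) \<Rightarrow> bool" where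
  "fwer_controls M P \<Theta> H \<alpha> S \<phi> \<longleftrightarrow>
     (\<forall>i\<in>S. elementary_test M (\<phi> i)) \<and>
     (\<forall>\<theta>\<in>\<Theta>. measure (P \<theta>) {x \<in> space M. \<exists>i\<in>S. \<theta> \<in> H i \<and> \<phi> i x = 1} \<le> \<alpha>)"

text \<open>The combined tests psi_i. phiJ j i is the test phi_i^j of the multiple
  test phi^j (meaningful for i in N - {j}); phiI i is phi_i^I (meaningful for i in N - I).\<close>
definition psi_base :: "nat set \<Rightarrow> (nat \<Rightarrow> nat \<Rightarrow> 'x \<Rightarrow> real) \<Rightarrow> (nat \<Rightarrow> 'x \<Rightarrow> real)
    \<Rightarrow> nat \<Rightarrow> 'x \<Rightarrow> real" where
  "psi_base J phiJ phiI i x = min (min_over (J - {i}) (\<lambda>j. phiJ j i x)) (phiI i x)"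

definition psi :: "nat set \<Rightarrow> nat set \<Rightarrow> (nat \<Rightarrow> nat \<Rightarrow> 'x \<Rightarrow> real) \<Rightarrow> (nat \<Rightarrow> 'x \<Rightarrow> real)
    \<Rightarrow> nat \<Rightarrow> 'x \<Rightarrow> real" where
  "psi I J phiJ phiI i x =
     (if i \<in> I then min (min_over J (\<lambda>j. phiJ j i x)) (max_over J (\<lambda>j. psi_base J phiJ phiI j x))
      else psi_base J phiJ phiI i x)"

end

theory Submission
  imports Defs
begin


lemma min_over_meas:
  assumes "finite S" "\<And>j. j \<in> S \<Longrightarrow> f j \<in> borel_measurable M"
  shows "(\<lambda>x. min_over S (\<lambda>j. f j x)) \<in> borel_measurable M"
  using assms by (cases "S = {}") (auto simp: min_over_def intro!: borel_measurable_Min)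

lemma max_over_meas:
  assumes "finite S" "\<And>j. j \<in> S \<Longrightarrow> f j \<in> borel_measurable M"
  shows "(\<lambda>x. max_over S (\<lambda>j. f j x)) \<in> borel_measurable M"
  using assms by (cases "S = {}") (auto simp: max_over_def intro!: borel_measurable_Max)

lemma min_over_01:
  assumes "finite S" "\<And>j. j \<in> S \<Longrightarrow> g j \<in> {0,1}"
  shows "min_over S g \<in> {0,1}"
proof (cases "S = {}")
  case False
  then have "Min (g ` S) \<in> g ` S" using assms(1) by (intro Min_in) auto
  then obtain j where "j \<in> S" "Min (g ` S) = g j" by auto
  then show ?thesis using assms False by (simp add: min_over_def)
qed (simp add: min_over_def)

lemma max_over_01:
  assumes "finite S" "\<And>j. j \<in> S \<Longrightarrow> g j \<in> {0,1}"
  shows "max_over S g \<in> {0,1}"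
proof (cases "S = {}")
  case False
  then have "Max (g ` S) \<in> g ` S" using assms(1) by (intro Max_in) auto
  then obtain j where "j \<in> S" "Max (g ` S) = g j" by auto
  then show ?thesis using assms False by (simp add: max_over_def)
qed (simp add: max_over_def)

lemma min_over_ge:
  assumes "finite S" "min_over S g \<ge> c" "j \<in> S"
  shows "g j \<ge> c"
proof -
  have "Min (g ` S) \<le> g j" using assms by (intro Min_le) auto
  then show ?thesis using assms by (auto simp: min_over_def split: if_splits)
qed

lemma max_over_ge:
  assumes "finite S" "max_over S g \<ge> c" "c > 0"
  shows "\<exists>j\<in>S. g j \<ge> c"
  using assms by (auto simp: max_over_def Max_ge_iff split: if_splits)

lemma one_of_ge: "(a::real) \<in> {0,1} \<Longrightarrow> a \<ge> 1 \<Longrightarrow> a = 1"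
  by auto

theorem theorem1:
  fixes M :: "'x measure" and P :: "'p \<Rightarrow> 'x measure" and \<Theta> :: "'p set"
    and H :: "nat \<Rightarrow> 'p set" and n :: nat and \<alpha> :: real
    and \<phi> :: "nat \<Rightarrow> 'x \<Rightarrow> real"
    and I J :: "nat set"
    and phiJ :: "nat \<Rightarrow> nat \<Rightarrow> 'x \<Rightarrow> real" and phiI :: "nat \<Rightarrow> 'x \<Rightarrow> real"
  assumes P: "\<And>\<theta>. \<theta> \<in> \<Theta> \<Longrightarrow> prob_space (P \<theta>) \<and> sets (P \<theta>) = sets M"
    and H: "\<And>i. i \<in> {1..n} \<Longrightarrow> H i \<subseteq> \<Theta>"
    and tests: "\<And>i. i \<in> {1..n} \<Longrightarrow> elementary_test M (\<phi> i)"
    and alpha: "0 < \<alpha>" "\<alpha> < 1"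
    and I: "I \<noteq> {}" "I \<subset> {1..n}"
    and J: "J \<noteq> {}" "J \<subset> {1..n}"
    and disj: "I \<inter> J = {}"
    and regions: "(\<Union>i\<in>I. {x \<in> space M. \<phi> i x = 1}) \<subseteq> (\<Union>j\<in>J. {x \<in> space M. \<phi> j x = 1})"
    and phiJ: "\<And>j. j \<in> J \<Longrightarrow> fwer_controls M P \<Theta> H \<alpha> ({1..n} - {j}) (phiJ j)"
    and phiI: "fwer_controls M P \<Theta> H \<alpha> ({1..n} - I) phiI"
  shows "fwer_controls M P \<Theta> H \<alpha> {1..n} (psi I J phiJ phiI)"
proof -
  let ?N = "{1..n::nat}"
  have finJ: "finite J" using J finite_subset[of J ?N] by auto
  have JN: "J \<subseteq> ?N - I" using J disj by auto
  have IN: "I \<subseteq> ?N" using I by auto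
  have tJ: "\<And>j i. j \<in> J \<Longrightarrow> i \<in> ?N \<Longrightarrow> i \<noteq> j \<Longrightarrow> elementary_test M (phiJ j i)"
    using phiJ unfolding fwer_controls_def by auto
  have tI: "\<And>i. i \<in> ?N \<Longrightarrow> i \<notin> I \<Longrightarrow> elementary_test M (phiI i)"
    using phiI unfolding fwer_controls_def by auto
  have base: "elementary_test M (psi_base J phiJ phiI i)" if i: "i \<in> ?N" "i \<notin> I" for i
  proof -
    have m1: "(\<lambda>x. min_over (J - {i}) (\<lambda>j. phiJ j i x)) \<in> borel_measurable M"
      using finJ tJ i by (intro min_over_meas) (auto simp: elementary_test_def)
    have m2: "phiI i \<in> borel_measurable M" using tI i by (auto simp: elementary_test_def)
    have "(\<lambda>x. psi_base J phiJ phiI i x) \<in> borel_measurable M"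
      unfolding psi_base_def using m1 m2 by measurable
    moreover have "psi_base J phiJ phiI i x \<in> {0,1}" if x: "x \<in> space M" for x
    proof -
      have "min_over (J - {i}) (\<lambda>j. phiJ j i x) \<in> {0,1}"
        using finJ tJ i x by (intro min_over_01) (auto simp: elementary_test_def)
      moreover have "phiI i x \<in> {0,1}" using tI i x by (auto simp: elementary_test_def)
      ultimately show ?thesis unfolding psi_base_def by (auto simp: min_def)
    qed
    ultimately show ?thesis unfolding elementary_test_def by auto
  qed
  have tests_psi: "elementary_test M (psi I J phiJ phiI i)" if i: "i \<in> ?N" for i
  proof (cases "i \<in> I")
    case False
    then have "psi I J phiJ phiI i = psi_base J phiJ phiI i" by (auto simp: psi_def fun_eq_iff)
    then show ?thesis using base i False by simp
  next
    case True
    have ij: "\<And>j. j \<in> J \<Longrightarrow> i \<noteq> j" using disj True by auto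
    have m1: "(\<lambda>x. min_over J (\<lambda>j. phiJ j i x)) \<in> borel_measurable M"
      using finJ tJ i ij by (intro min_over_meas) (auto simp: elementary_test_def)
    have m2: "(\<lambda>x. max_over J (\<lambda>j. psi_base J phiJ phiI j x)) \<in> borel_measurable M"
      using finJ base JN by (intro max_over_meas) (auto simp: elementary_test_def)
    have "(\<lambda>x. psi I J phiJ phiI i x) \<in> borel_measurable M"
      unfolding psi_def using True m1 m2 by simp
    moreover have "psi I J phiJ phiI i x \<in> {0,1}" if x: "x \<in> space M" for x
    proof -
      have "min_over J (\<lambda>j. phiJ j i x) \<in> {0,1}"
        using finJ tJ i x ij by (intro min_over_01) (auto simp: elementary_test_def)
      moreover have "max_over J (\<lambda>j. psi_base J phiJ phiI j x) \<in> {0,1}"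
      proof (rule max_over_01[OF finJ])
        fix j assume "j \<in> J"
        then have "j \<in> ?N" "j \<notin> I" using JN by auto
        then show "psi_base J phiJ phiI j x \<in> {0,1}" using base x unfolding elementary_test_def by blast
      qed
      ultimately show ?thesis unfolding psi_def using True by (auto simp: min_def)
    qed
    ultimately show ?thesis unfolding elementary_test_def by auto
  qed
  have bound: "measure (P \<theta>) {x \<in> space M. \<exists>i\<in>?N. \<theta> \<in> H i \<and> psi I J phiJ phiI i x = 1} \<le> \<alpha>"
    if th: "\<theta> \<in> \<Theta>" for \<theta>
  proof -
    interpret prob_space "P \<theta>" using P th by auto
    have sp: "space (P \<theta>) = space M" using P th sets_eq_imp_space_eq by blast
    have sets: "sets (P \<theta>) = sets M" using P th by auto
    have meas: "{x \<in> space M. \<exists>i\<in>S. \<theta> \<in> H i \<and> f i x = 1} \<in> sets (P \<theta>)"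
      if "finite S" "\<And>i. i \<in> S \<Longrightarrow> elementary_test M (f i)" for S and f :: "nat \<Rightarrow> 'x \<Rightarrow> real"
    proof -
      have "{x \<in> space M. \<exists>i\<in>S. \<theta> \<in> H i \<and> f i x = 1} =
            (\<Union>i\<in>{i\<in>S. \<theta> \<in> H i}. {x \<in> space M. f i x = 1})" by auto
      also have "\<dots> \<in> sets M"
      proof (intro sets.finite_UN)
        fix i assume "i \<in> {i\<in>S. \<theta> \<in> H i}"
        then have [measurable]: "f i \<in> borel_measurable M" using that by (auto simp: elementary_test_def)
        show "{x \<in> space M. f i x = 1} \<in> sets M" by measurable
      qed (use that in auto)
      finally show ?thesis using sets by simp
    qed
    show ?thesis
    proof (cases "\<exists>j1\<in>J. \<theta> \<notin> H j1")
      case True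
      then obtain j1 where j1: "j1 \<in> J" "\<theta> \<notin> H j1" by auto
      have "{x \<in> space M. \<exists>i\<in>?N. \<theta> \<in> H i \<and> psi I J phiJ phiI i x = 1}
          \<subseteq> {x \<in> space M. \<exists>i\<in>?N - {j1}. \<theta> \<in> H i \<and> phiJ j1 i x = 1}"
      proof safe
        fix x i assume x: "x \<in> space M" and i: "i \<in> ?N" "\<theta> \<in> H i" and ps: "psi I J phiJ phiI i x = 1"
        have ij: "i \<noteq> j1" using i j1 by auto
        have "phiJ j1 i x \<ge> 1"
        proof (cases "i \<in> I")
          case True
          then have "min_over J (\<lambda>j. phiJ j i x) \<ge> 1" using ps by (simp add: psi_def)
          then show ?thesis by (rule min_over_ge[OF finJ _ j1(1)])
        next
          case False
          then have m: "min_over (J - {i}) (\<lambda>j. phiJ j i x) \<ge> 1" using ps by (simp add: psi_def psi_base_def)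
          have f: "finite (J - {i})" using finJ by simp
          have jj: "j1 \<in> J - {i}" using j1 ij by simp
          show ?thesis by (rule min_over_ge[OF f m jj])
        qed
        moreover have "phiJ j1 i x \<in> {0,1}" using tJ j1 i ij x by (auto simp: elementary_test_def)
        ultimately show "\<exists>i'\<in>?N - {j1}. \<theta> \<in> H i' \<and> phiJ j1 i' x = 1" using i ij by auto
      qed
      then have "measure (P \<theta>) {x \<in> space M. \<exists>i\<in>?N. \<theta> \<in> H i \<and> psi I J phiJ phiI i x = 1}
          \<le> measure (P \<theta>) {x \<in> space M. \<exists>i\<in>?N - {j1}. \<theta> \<in> H i \<and> phiJ j1 i x = 1}"
      proof (rule finite_measure_mono)
        show "{x \<in> space M. \<exists>i\<in>?N - {j1}. \<theta> \<in> H i \<and> phiJ j1 i x = 1} \<in> sets (P \<theta>)"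
        proof (rule meas)
          show "finite (?N - {j1})" by simp
          show "\<And>i. i \<in> ?N - {j1} \<Longrightarrow> elementary_test M (phiJ j1 i)" using tJ j1 by blast
        qed
      qed
      also have "\<dots> \<le> \<alpha>" using phiJ[OF j1(1)] th unfolding fwer_controls_def by auto
      finally show ?thesis .
    next
      case False
      have "{x \<in> space M. \<exists>i\<in>?N. \<theta> \<in> H i \<and> psi I J phiJ phiI i x = 1}
          \<subseteq> {x \<in> space M. \<exists>i\<in>?N - I. \<theta> \<in> H i \<and> phiI i x = 1}"
      proof safe
        fix x i assume x: "x \<in> space M" and i: "i \<in> ?N" "\<theta> \<in> H i" and ps: "psi I J phiJ phiI i x = 1"
        show "\<exists>i'\<in>?N - I. \<theta> \<in> H i' \<and> phiI i' x = 1"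
        proof (cases "i \<in> I")
          case True
          then have "max_over J (\<lambda>j. psi_base J phiJ phiI j x) \<ge> 1" using ps by (simp add: psi_def)
          then obtain j where j: "j \<in> J" "psi_base J phiJ phiI j x \<ge> 1"
            using max_over_ge[OF finJ, of 1] by auto
          then have "phiI j x \<ge> 1" by (simp add: psi_base_def)
          moreover have "j \<in> ?N" "j \<notin> I" using JN j by auto
          then have "phiI j x \<in> {0,1}" using tI x unfolding elementary_test_def by blast
          moreover have "\<theta> \<in> H j" using False j by auto
          ultimately show ?thesis using JN j by auto
        next
          case False
          then have "phiI i x \<ge> 1" using ps by (simp add: psi_def psi_base_def)
          moreover have "phiI i x \<in> {0,1}" using tI i False x by (auto simp: elementary_test_def)
          ultimately show ?thesis using i False by auto
        qed
      qed
      then have "measure (P \<theta>) {x \<in> space M. \<exists>i\<in>?N. \<theta> \<in> H i \<and> psi I J phiJ phiI i x = 1}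
          \<le> measure (P \<theta>) {x \<in> space M. \<exists>i\<in>?N - I. \<theta> \<in> H i \<and> phiI i x = 1}"
      proof (rule finite_measure_mono)
        show "{x \<in> space M. \<exists>i\<in>?N - I. \<theta> \<in> H i \<and> phiI i x = 1} \<in> sets (P \<theta>)"
        proof (rule meas)
          show "finite (?N - I)" by simp
          show "\<And>i. i \<in> ?N - I \<Longrightarrow> elementary_test M (phiI i)" using tI by blast
        qed
      qed
      also have "\<dots> \<le> \<alpha>" using phiI th unfolding fwer_controls_def by auto
      finally show ?thesis .
    qed
  qed
  show ?thesis unfolding fwer_controls_def using tests_psi bound by auto
qed

end
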